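(* Let $\mathcal{A}$ be an abelian category and $\alpha$ an amplitude on $\mathcal{A}$. Then $\alpha(A)=\mathrm{d}_\alpha(A,0)$ for every $A\in\operatorname{ob}\mathcal{A}$.
   Context: An amplitude on an abelian category $\mathcal{A}$ is a function $\alpha\colon\operatorname{ob}\mathcal{A}\to[0,\infty]$ with $\alpha(0)=0$ such that for every short exact sequence $0\to A\to B\to C\to0$, $\alpha(A)\le\alpha(B)$, $\alpha(C)\le\alpha(B)$ and $\alpha(B)\le\alpha(A)+\alpha(C)$. The cost of a zigzag $A\xleftarrow{\gamma_1}C_1\xrightarrow{\gamma_2}\cdots\xleftarrow{\gamma_{n-1}}C_n\xrightarrow{\gamma_n}B$ is $\sum_i\alpha(\ker\gamma_i)+\alpha(\operatorname{coker}\gamma_i)$; the path metric $\mathrm{d}_\alpha(A,B)$ is the infimum of costs over all zigzags between $A$ and $B$ ($\inf\emptyset=\infty$). *)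

theory Defs
  imports Main "HOL-Library.Extended_Nonnegative_Real"
begin

record ('o, 'm) cat =
  Obj :: "'o set"
  Arr :: "'m set"
  Dom :: "'m \<Rightarrow> 'o"
  Cod :: "'m \<Rightarrow> 'o"
  Id  :: "'o \<Rightarrow> 'm"
  Comp :: "'m \<Rightarrow> 'm \<Rightarrow> 'm"   (* Comp C g f = g \<circ> f *)

definition hom :: "('o, 'm) cat \<Rightarrow> 'o \<Rightarrow> 'o \<Rightarrow> 'm set" where
  "hom C a b = {f \<in> Arr C. Dom C f = a \<and> Cod C f = b}"

definition category :: "('o, 'm) cat \<Rightarrow> bool" where
  "category C \<longleftrightarrow>
     (\<forall>f \<in> Arr C. Dom C f \<in> Obj C \<and> Cod C f \<in> Obj C) \<and>
     (\<forall>a \<in> Obj C. Id C a \<in> hom C a a) \<and>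
     (\<forall>f \<in> Arr C. \<forall>g \<in> Arr C. Dom C g = Cod C f \<longrightarrow>
         Comp C g f \<in> hom C (Dom C f) (Cod C g)) \<and>
     (\<forall>f \<in> Arr C. \<forall>g \<in> Arr C. \<forall>h \<in> Arr C. Dom C g = Cod C f \<and> Dom C h = Cod C g \<longrightarrow>
         Comp C h (Comp C g f) = Comp C (Comp C h g) f) \<and>
     (\<forall>f \<in> Arr C. Comp C (Id C (Cod C f)) f = f \<and> Comp C f (Id C (Dom C f)) = f)"

definition zero_obj :: "('o, 'm) cat \<Rightarrow> 'o \<Rightarrow> bool" where
  "zero_obj C z \<longleftrightarrow> z \<in> Obj C \<and>
     (\<forall>a \<in> Obj C. (\<exists>!f. f \<in> hom C a z) \<and> (\<exists>!f. f \<in> hom C z a))"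

definition is_zero_arr :: "('o, 'm) cat \<Rightarrow> 'm \<Rightarrow> bool" where
  "is_zero_arr C f \<longleftrightarrow> f \<in> Arr C \<and>
     (\<exists>z g h. zero_obj C z \<and> g \<in> hom C (Dom C f) z \<and> h \<in> hom C z (Cod C f) \<and> f = Comp C h g)"

definition mono :: "('o, 'm) cat \<Rightarrow> 'm \<Rightarrow> bool" where
  "mono C f \<longleftrightarrow> f \<in> Arr C \<and>
     (\<forall>g \<in> Arr C. \<forall>h \<in> Arr C. Cod C g = Dom C f \<and> Cod C h = Dom C f \<and> Dom C g = Dom C h
        \<and> Comp C f g = Comp C f h \<longrightarrow> g = h)"

definition epi :: "('o, 'm) cat \<Rightarrow> 'm \<Rightarrow> bool" where
  "epi C f \<longleftrightarrow> f \<in> Arr C \<and>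
     (\<forall>g \<in> Arr C. \<forall>h \<in> Arr C. Dom C g = Cod C f \<and> Dom C h = Cod C f \<and> Cod C g = Cod C h
        \<and> Comp C g f = Comp C h f \<longrightarrow> g = h)"

definition is_kernel :: "('o, 'm) cat \<Rightarrow> 'm \<Rightarrow> 'm \<Rightarrow> bool" where
  "is_kernel C f k \<longleftrightarrow> f \<in> Arr C \<and> k \<in> Arr C \<and> Cod C k = Dom C f \<and>
     is_zero_arr C (Comp C f k) \<and>
     (\<forall>g \<in> Arr C. Cod C g = Dom C f \<and> is_zero_arr C (Comp C f g) \<longrightarrow>
        (\<exists>!u. u \<in> hom C (Dom C g) (Dom C k) \<and> Comp C k u = g))"

definition is_cokernel :: "('o, 'm) cat \<Rightarrow> 'm \<Rightarrow> 'm \<Rightarrow> bool" where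
  "is_cokernel C f c \<longleftrightarrow> f \<in> Arr C \<and> c \<in> Arr C \<and> Dom C c = Cod C f \<and>
     is_zero_arr C (Comp C c f) \<and>
     (\<forall>g \<in> Arr C. Dom C g = Cod C f \<and> is_zero_arr C (Comp C g f) \<longrightarrow>
        (\<exists>!u. u \<in> hom C (Cod C c) (Cod C g) \<and> Comp C u c = g))"

definition is_product :: "('o, 'm) cat \<Rightarrow> 'o \<Rightarrow> 'o \<Rightarrow> 'o \<Rightarrow> 'm \<Rightarrow> 'm \<Rightarrow> bool" where
  "is_product C a b p p1 p2 \<longleftrightarrow> p \<in> Obj C \<and> p1 \<in> hom C p a \<and> p2 \<in> hom C p b \<and>
     (\<forall>x \<in> Obj C. \<forall>f \<in> hom C x a. \<forall>g \<in> hom C x b.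
        \<exists>!u. u \<in> hom C x p \<and> Comp C p1 u = f \<and> Comp C p2 u = g)"

definition is_coproduct :: "('o, 'm) cat \<Rightarrow> 'o \<Rightarrow> 'o \<Rightarrow> 'o \<Rightarrow> 'm \<Rightarrow> 'm \<Rightarrow> bool" where
  "is_coproduct C a b s i1 i2 \<longleftrightarrow> s \<in> Obj C \<and> i1 \<in> hom C a s \<and> i2 \<in> hom C b s \<and>
     (\<forall>x \<in> Obj C. \<forall>f \<in> hom C a x. \<forall>g \<in> hom C b x.
        \<exists>!u. u \<in> hom C s x \<and> Comp C u i1 = f \<and> Comp C u i2 = g)"

text \<open>Abelian category (Freyd / Mac Lane, VIII.3): a category with a zero object, all binary
  products and coproducts, all kernels and cokernels, in which every monomorphism is a kernel
  and every epimorphism is a cokernel.  (The additive structure is then uniquely determined.)\<close>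
definition abelian_category :: "('o, 'm) cat \<Rightarrow> bool" where
  "abelian_category C \<longleftrightarrow> category C \<and>
     (\<exists>z. zero_obj C z) \<and>
     (\<forall>a \<in> Obj C. \<forall>b \<in> Obj C. \<exists>p p1 p2. is_product C a b p p1 p2) \<and>
     (\<forall>a \<in> Obj C. \<forall>b \<in> Obj C. \<exists>s i1 i2. is_coproduct C a b s i1 i2) \<and>
     (\<forall>f \<in> Arr C. (\<exists>k. is_kernel C f k) \<and> (\<exists>c. is_cokernel C f c)) \<and>
     (\<forall>f. mono C f \<longrightarrow> (\<exists>g. is_kernel C g f)) \<and>
     (\<forall>f. epi C f \<longrightarrow> (\<exists>g. is_cokernel C g f))"

definition short_exact :: "('o, 'm) cat \<Rightarrow> 'm \<Rightarrow> 'm \<Rightarrow> bool" where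
  "short_exact C f g \<longleftrightarrow> is_kernel C g f \<and> is_cokernel C f g"

definition amplitude :: "('o, 'm) cat \<Rightarrow> ('o \<Rightarrow> ennreal) \<Rightarrow> bool" where
  "amplitude C \<alpha> \<longleftrightarrow>
     (\<forall>z. zero_obj C z \<longrightarrow> \<alpha> z = 0) \<and>
     (\<forall>f g. short_exact C f g \<longrightarrow>
        \<alpha> (Dom C f) \<le> \<alpha> (Cod C f) \<and> \<alpha> (Cod C g) \<le> \<alpha> (Cod C f) \<and>
        \<alpha> (Cod C f) \<le> \<alpha> (Dom C f) + \<alpha> (Cod C g))"

text \<open>Amplitude of the kernel / cokernel object of an arrow (well defined up to isomorphism,
  and amplitudes are isomorphism invariant).\<close>
definition amp_ker :: "('o, 'm) cat \<Rightarrow> ('o \<Rightarrow> ennreal) \<Rightarrow> 'm \<Rightarrow> ennreal" where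
  "amp_ker C \<alpha> f = \<alpha> (Dom C (SOME k. is_kernel C f k))"

definition amp_coker :: "('o, 'm) cat \<Rightarrow> ('o \<Rightarrow> ennreal) \<Rightarrow> 'm \<Rightarrow> ennreal" where
  "amp_coker C \<alpha> f = \<alpha> (Cod C (SOME c. is_cokernel C f c))"

text \<open>A zigzag A \<leftarrow> C_1 \<rightarrow> X_1 \<leftarrow> C_2 \<rightarrow> ... \<leftarrow> C_n \<rightarrow> B is a nonempty list of spans
  (l_i, r_i) with Dom l_i = Dom r_i = C_i, Cod l_1 = A, Cod r_n = B and Cod r_i = Cod l_(i+1).\<close>
definition zigzag :: "('o, 'm) cat \<Rightarrow> 'o \<Rightarrow> 'o \<Rightarrow> ('m \<times> 'm) list \<Rightarrow> bool" where
  "zigzag C A B zs \<longleftrightarrow> zs \<noteq> [] \<and>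
     (\<forall>i < length zs. fst (zs ! i) \<in> Arr C \<and> snd (zs ! i) \<in> Arr C \<and>
        Dom C (fst (zs ! i)) = Dom C (snd (zs ! i))) \<and>
     Cod C (fst (hd zs)) = A \<and> Cod C (snd (last zs)) = B \<and>
     (\<forall>i. Suc i < length zs \<longrightarrow> Cod C (snd (zs ! i)) = Cod C (fst (zs ! Suc i)))"

definition zigzag_cost :: "('o, 'm) cat \<Rightarrow> ('o \<Rightarrow> ennreal) \<Rightarrow> ('m \<times> 'm) list \<Rightarrow> ennreal" where
  "zigzag_cost C \<alpha> zs =
     (\<Sum>p \<leftarrow> zs. amp_ker C \<alpha> (fst p) + amp_coker C \<alpha> (fst p)
               + amp_ker C \<alpha> (snd p) + amp_coker C \<alpha> (snd p))"

text \<open>Path metric; Inf of the empty set in ennreal is \<infinity>.\<close>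
definition path_dist :: "('o, 'm) cat \<Rightarrow> ('o \<Rightarrow> ennreal) \<Rightarrow> 'o \<Rightarrow> 'o \<Rightarrow> ennreal" where
  "path_dist C \<alpha> A B = Inf {zigzag_cost C \<alpha> zs | zs. zigzag C A B zs}"

end

theory Submission
  imports Defs
begin


context fixes C :: "('o,'m) cat" assumes cat: "category C" begin

lemma ex1_uniq: "\<exists>!u. P u \<Longrightarrow> P a \<Longrightarrow> P b \<Longrightarrow> a = b" by blast

lemma in_hom: "f \<in> hom C a b \<longleftrightarrow> f \<in> Arr C \<and> Dom C f = a \<and> Cod C f = b"
  by (simp add: hom_def)

lemma comp_arr[simp]: "f \<in> Arr C \<Longrightarrow> g \<in> Arr C \<Longrightarrow> Dom C g = Cod C f \<Longrightarrow> Comp C g f \<in> Arr C"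
  using cat unfolding category_def hom_def by blast
lemma comp_dom[simp]: "f \<in> Arr C \<Longrightarrow> g \<in> Arr C \<Longrightarrow> Dom C g = Cod C f \<Longrightarrow> Dom C (Comp C g f) = Dom C f"
  using cat unfolding category_def hom_def by blast
lemma comp_cod[simp]: "f \<in> Arr C \<Longrightarrow> g \<in> Arr C \<Longrightarrow> Dom C g = Cod C f \<Longrightarrow> Cod C (Comp C g f) = Cod C g"
  using cat unfolding category_def hom_def by blast
lemma assoc: "f \<in> Arr C \<Longrightarrow> g \<in> Arr C \<Longrightarrow> h \<in> Arr C \<Longrightarrow> Dom C g = Cod C f \<Longrightarrow> Dom C h = Cod C g \<Longrightarrow>
   Comp C h (Comp C g f) = Comp C (Comp C h g) f"
  using cat unfolding category_def by blast
lemma id_arr[simp]: "a \<in> Obj C \<Longrightarrow> Id C a \<in> Arr C" 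
  using cat unfolding category_def hom_def by blast
lemma id_dom[simp]: "a \<in> Obj C \<Longrightarrow> Dom C (Id C a) = a" 
  using cat unfolding category_def hom_def by blast
lemma id_cod[simp]: "a \<in> Obj C \<Longrightarrow> Cod C (Id C a) = a" 
  using cat unfolding category_def hom_def by blast
lemma id_left: "f \<in> Arr C \<Longrightarrow> Comp C (Id C (Cod C f)) f = f"
  using cat unfolding category_def by blast
lemma id_right: "f \<in> Arr C \<Longrightarrow> Comp C f (Id C (Dom C f)) = f"
  using cat unfolding category_def by blast
lemma dom_obj[simp]: "f \<in> Arr C \<Longrightarrow> Dom C f \<in> Obj C"
  using cat unfolding category_def by blast
lemma cod_obj[simp]: "f \<in> Arr C \<Longrightarrow> Cod C f \<in> Obj C"
  using cat unfolding category_def by blast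

lemma zero_to: "zero_obj C z \<Longrightarrow> a \<in> Obj C \<Longrightarrow> \<exists>f. f \<in> Arr C \<and> Dom C f = a \<and> Cod C f = z"
  unfolding zero_obj_def hom_def by blast
lemma zero_from: "zero_obj C z \<Longrightarrow> a \<in> Obj C \<Longrightarrow> \<exists>f. f \<in> Arr C \<and> Dom C f = z \<and> Cod C f = a"
  unfolding zero_obj_def hom_def by blast
lemma zero_to_uniq: "zero_obj C z \<Longrightarrow> f \<in> Arr C \<Longrightarrow> g \<in> Arr C \<Longrightarrow> Dom C f = Dom C g \<Longrightarrow> Cod C f = z \<Longrightarrow> Cod C g = z \<Longrightarrow> f = g"
  unfolding zero_obj_def hom_def by (metis (mono_tags, lifting) dom_obj mem_Collect_eq)
lemma zero_from_uniq: "zero_obj C z \<Longrightarrow> f \<in> Arr C \<Longrightarrow> g \<in> Arr C \<Longrightarrow> Cod C f = Cod C g \<Longrightarrow> Dom C f = z \<Longrightarrow> Dom C g = z \<Longrightarrow> f = g"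
  unfolding zero_obj_def hom_def by (metis (mono_tags, lifting) cod_obj mem_Collect_eq)

lemma zero_obj_obj: "zero_obj C z \<Longrightarrow> z \<in> Obj C" unfolding zero_obj_def by (elim conjE)

lemma zero_arrD: "is_zero_arr C f \<Longrightarrow> \<exists>z g h. zero_obj C z \<and> g \<in> Arr C \<and> h \<in> Arr C \<and> Dom C g = Dom C f \<and> Cod C g = z
   \<and> Dom C h = z \<and> Cod C h = Cod C f \<and> f = Comp C h g"
  unfolding is_zero_arr_def hom_def by blast
lemma zero_arrI: "zero_obj C z \<Longrightarrow> g \<in> Arr C \<Longrightarrow> h \<in> Arr C \<Longrightarrow> Cod C g = z \<Longrightarrow> Dom C h = z \<Longrightarrow> is_zero_arr C (Comp C h g)"
  unfolding is_zero_arr_def hom_def by (rule conjI, simp, rule exI[of _ z], rule exI[of _ g], rule exI[of _ h], simp)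

lemma zero_comp_right: "is_zero_arr C f \<Longrightarrow> x \<in> Arr C \<Longrightarrow> Cod C x = Dom C f \<Longrightarrow> is_zero_arr C (Comp C f x)"
proof -
  assume a: "is_zero_arr C f" "x \<in> Arr C" "Cod C x = Dom C f"
  then obtain z g h where z: "zero_obj C z" "g \<in> Arr C" "h \<in> Arr C" "Dom C g = Dom C f" "Cod C g = z"
    "Dom C h = z" "Cod C h = Cod C f" "f = Comp C h g" using zero_arrD by blast
  have "Comp C f x = Comp C h (Comp C g x)" using z a by (simp add: assoc)
  then show ?thesis using z a zero_arrI[of z "Comp C g x" h] by simp
qed

lemma zero_comp_left: "is_zero_arr C f \<Longrightarrow> x \<in> Arr C \<Longrightarrow> Dom C x = Cod C f \<Longrightarrow> is_zero_arr C (Comp C x f)"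
proof -
  assume a: "is_zero_arr C f" "x \<in> Arr C" "Dom C x = Cod C f"
  then obtain z g h where z: "zero_obj C z" "g \<in> Arr C" "h \<in> Arr C" "Dom C g = Dom C f" "Cod C g = z"
    "Dom C h = z" "Cod C h = Cod C f" "f = Comp C h g" using zero_arrD by blast
  have "Comp C x f = Comp C (Comp C x h) g" using z a by (simp add: assoc)
  then show ?thesis using z a zero_arrI[of z g "Comp C x h"] by simp
qed

lemma zero_arr_arr: "is_zero_arr C f \<Longrightarrow> f \<in> Arr C" unfolding is_zero_arr_def by blast

lemma zero_unique: "is_zero_arr C f \<Longrightarrow> is_zero_arr C f' \<Longrightarrow> Dom C f = Dom C f' \<Longrightarrow> Cod C f = Cod C f' \<Longrightarrow> f = f'"
proof -
  assume a: "is_zero_arr C f" "is_zero_arr C f'" "Dom C f = Dom C f'" "Cod C f = Cod C f'"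
  obtain z g h where z: "zero_obj C z" "g \<in> Arr C" "h \<in> Arr C" "Dom C g = Dom C f" "Cod C g = z"
    "Dom C h = z" "Cod C h = Cod C f" "f = Comp C h g" using a zero_arrD by blast
  obtain z' g' h' where z': "zero_obj C z'" "g' \<in> Arr C" "h' \<in> Arr C" "Dom C g' = Dom C f'" "Cod C g' = z'"
    "Dom C h' = z'" "Cod C h' = Cod C f'" "f' = Comp C h' g'" using a zero_arrD by blast
  obtain p where p: "p \<in> Arr C" "Dom C p = z" "Cod C p = z'" using zero_to[of z' z] z(1) z'(1) zero_obj_obj by blast
  have pa: "Dom C (Comp C p g) = Dom C g'" "Cod C (Comp C p g) = z'" "Comp C p g \<in> Arr C"
    using z(2,4,5) z'(4) p a(3) by auto
  have 1: "g' = Comp C p g" using zero_to_uniq[OF z'(1) z'(2) pa(3)] pa z'(5) by simp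
  have pb: "Cod C (Comp C h' p) = Cod C h" "Dom C (Comp C h' p) = z" "Comp C h' p \<in> Arr C"
    using z(3,6,7) z'(3,6,7) p a(4) by auto
  have 2: "h = Comp C h' p" using zero_from_uniq[OF z(1) z(3) pb(3)] pb z(6) by simp
  have "f' = Comp C h' (Comp C p g)" using 1 z'(8) by simp
  also have "\<dots> = Comp C (Comp C h' p) g" using assoc[of g p h'] z(2,5) z'(3,6) p by simp
  finally show ?thesis using 2 z(8) by simp
qed

lemma monoD: "mono C m \<Longrightarrow> a \<in> Arr C \<Longrightarrow> b \<in> Arr C \<Longrightarrow> Cod C a = Dom C m \<Longrightarrow> Cod C b = Dom C m \<Longrightarrow> Dom C a = Dom C b
  \<Longrightarrow> Comp C m a = Comp C m b \<Longrightarrow> a = b"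
  unfolding mono_def by blast

lemma kernel_props: "is_kernel C f k \<Longrightarrow> k \<in> Arr C \<and> f \<in> Arr C \<and> Cod C k = Dom C f \<and> is_zero_arr C (Comp C f k)"
  unfolding is_kernel_def by blast
lemma cokernel_props: "is_cokernel C f c \<Longrightarrow> c \<in> Arr C \<and> f \<in> Arr C \<and> Dom C c = Cod C f \<and> is_zero_arr C (Comp C c f)"
  unfolding is_cokernel_def by blast

lemma kernel_lift: "is_kernel C f k \<Longrightarrow> g \<in> Arr C \<Longrightarrow> Cod C g = Dom C f \<Longrightarrow> is_zero_arr C (Comp C f g) \<Longrightarrow>
   \<exists>u. u \<in> Arr C \<and> Dom C u = Dom C g \<and> Cod C u = Dom C k \<and> Comp C k u = g"
  unfolding is_kernel_def hom_def by blast
lemma cokernel_desc: "is_cokernel C f c \<Longrightarrow> g \<in> Arr C \<Longrightarrow> Dom C g = Cod C f \<Longrightarrow> is_zero_arr C (Comp C g f) \<Longrightarrow>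
   \<exists>u. u \<in> Arr C \<and> Dom C u = Cod C c \<and> Cod C u = Cod C g \<and> Comp C u c = g"
  unfolding is_cokernel_def hom_def by blast

lemma kernel_mono: "is_kernel C f k \<Longrightarrow> mono C k"
proof -
  assume k: "is_kernel C f k"
  show ?thesis unfolding mono_def
  proof (intro conjI ballI impI)
    show "k \<in> Arr C" using k kernel_props by blast
    fix a b assume ab: "a \<in> Arr C" "b \<in> Arr C" "Cod C a = Dom C k \<and> Cod C b = Dom C k \<and> Dom C a = Dom C b \<and> Comp C k a = Comp C k b"
    have kp: "k \<in> Arr C" "f \<in> Arr C" "Cod C k = Dom C f" "is_zero_arr C (Comp C f k)" using k kernel_props by blast+
    let ?g = "Comp C k a"
    have ca: "Cod C a = Dom C k" using ab(3) by blast
    have g1: "?g \<in> Arr C" "Cod C ?g = Dom C f" using kp(1,3) ab(1) ca by auto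
    have "Comp C f ?g = Comp C (Comp C f k) a" using assoc[of a k f] kp(1,2,3) ab(1) ca by simp
    moreover have "is_zero_arr C (Comp C (Comp C f k) a)"
      using zero_comp_right[OF kp(4) ab(1)] kp(1,2,3) ca by simp
    ultimately have g: "?g \<in> Arr C" "Cod C ?g = Dom C f" "is_zero_arr C (Comp C f ?g)" using g1 by auto
    have kk: "\<forall>g \<in> Arr C. Cod C g = Dom C f \<and> is_zero_arr C (Comp C f g) \<longrightarrow>
        (\<exists>!u. u \<in> hom C (Dom C g) (Dom C k) \<and> Comp C k u = g)" using k unfolding is_kernel_def by (elim conjE)
    have "\<exists>!u. u \<in> hom C (Dom C ?g) (Dom C k) \<and> Comp C k u = ?g"
      using kk g by blast
    moreover have "a \<in> hom C (Dom C ?g) (Dom C k) \<and> Comp C k a = ?g"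
      using ab(1) kp(1) ca unfolding hom_def by simp
    moreover have "b \<in> hom C (Dom C ?g) (Dom C k) \<and> Comp C k b = ?g"
      using ab(1,2,3) kp(1) ca unfolding hom_def by auto
    ultimately show "a = b" by (rule ex1_uniq)
  qed
qed

lemma cokernel_epi: "is_cokernel C f c \<Longrightarrow> epi C c"
proof -
  assume k: "is_cokernel C f c"
  show ?thesis unfolding epi_def
  proof (intro conjI ballI impI)
    show "c \<in> Arr C" using k cokernel_props by blast
    fix a b assume ab: "a \<in> Arr C" "b \<in> Arr C" "Dom C a = Cod C c \<and> Dom C b = Cod C c \<and> Cod C a = Cod C b \<and> Comp C a c = Comp C b c"
    have kp: "c \<in> Arr C" "f \<in> Arr C" "Dom C c = Cod C f" "is_zero_arr C (Comp C c f)" using k cokernel_props by blast+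
    let ?g = "Comp C a c"
    have ca: "Dom C a = Cod C c" using ab(3) by blast
    have g1: "?g \<in> Arr C" "Dom C ?g = Cod C f" using kp(1,3) ab(1) ca by auto
    have e1: "Comp C ?g f = Comp C a (Comp C c f)" using assoc[of f c a] kp(1,2,3) ab(1) ca by simp
    have e2: "is_zero_arr C (Comp C a (Comp C c f))"
      using zero_comp_left[OF kp(4) ab(1)] kp(1,2,3) ca by simp
    have e3: "is_zero_arr C (Comp C ?g f)" using e2 by (simp only: e1)
    note g = g1 e3
    have kk: "\<forall>g \<in> Arr C. Dom C g = Cod C f \<and> is_zero_arr C (Comp C g f) \<longrightarrow>
        (\<exists>!u. u \<in> hom C (Cod C c) (Cod C g) \<and> Comp C u c = g)" using k unfolding is_cokernel_def by (elim conjE)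
    have "\<exists>!u. u \<in> hom C (Cod C c) (Cod C ?g) \<and> Comp C u c = ?g"
      using kk g by blast
    moreover have "a \<in> hom C (Cod C c) (Cod C ?g) \<and> Comp C a c = ?g"
      using ab(1) kp(1) ca unfolding hom_def by simp
    moreover have "b \<in> hom C (Cod C c) (Cod C ?g) \<and> Comp C b c = ?g"
      using ab(1,2,3) kp(1) ca unfolding hom_def by auto
    ultimately show "a = b" by (rule ex1_uniq)
  qed
qed

end



context fixes C :: "('o,'m) cat" assumes cat: "category C" begin

lemma mono_comp: "mono C m \<Longrightarrow> mono C j \<Longrightarrow> Cod C j = Dom C m \<Longrightarrow> mono C (Comp C m j)"
proof -
  assume a: "mono C m" "mono C j" "Cod C j = Dom C m"
  have mj: "m \<in> Arr C" "j \<in> Arr C" using a(1,2) unfolding mono_def by simp_all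
  show ?thesis unfolding mono_def
  proof (intro conjI ballI impI)
    show "Comp C m j \<in> Arr C" using mj a(3) cat by simp
    fix x y assume xy: "x \<in> Arr C" "y \<in> Arr C" "Cod C x = Dom C (Comp C m j) \<and> Cod C y = Dom C (Comp C m j) \<and>
      Dom C x = Dom C y \<and> Comp C (Comp C m j) x = Comp C (Comp C m j) y"
    have cx: "Cod C x = Dom C j" "Cod C y = Dom C j" "Dom C x = Dom C y" using xy(3) mj a(3) cat by auto
    have "Comp C m (Comp C j x) = Comp C m (Comp C j y)" using xy(1,2,3) mj a(3) cx cat by (simp add: assoc)
    then have "Comp C j x = Comp C j y" using monoD[OF cat a(1)] xy(1,2) mj a(3) cx cat by simp
    then show "x = y" using monoD[OF cat a(2)] xy(1,2) cx by simp
  qed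
qed

lemma ab_ker: "abelian_category C \<Longrightarrow> f \<in> Arr C \<Longrightarrow> \<exists>k. is_kernel C f k"
  by (simp add: abelian_category_def)
lemma ab_coker: "abelian_category C \<Longrightarrow> f \<in> Arr C \<Longrightarrow> \<exists>k. is_cokernel C f k"
  by (simp add: abelian_category_def)
lemma ab_mono: "abelian_category C \<Longrightarrow> mono C f \<Longrightarrow> \<exists>g. is_kernel C g f"
  by (simp add: abelian_category_def)
lemma ab_epi: "abelian_category C \<Longrightarrow> epi C f \<Longrightarrow> \<exists>g. is_cokernel C g f"
  by (simp add: abelian_category_def)
lemma ab_prod: "abelian_category C \<Longrightarrow> a \<in> Obj C \<Longrightarrow> b \<in> Obj C \<Longrightarrow> \<exists>p p1 p2. is_product C a b p p1 p2"
  by (simp add: abelian_category_def)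

lemma prod_props: "is_product C a b p p1 p2 \<Longrightarrow> p1 \<in> Arr C \<and> Dom C p1 = p \<and> Cod C p1 = a \<and> p2 \<in> Arr C \<and> Dom C p2 = p \<and> Cod C p2 = b \<and> p \<in> Obj C"
  by (simp add: is_product_def hom_def)
lemma prod_pair: "is_product C a b p p1 p2 \<Longrightarrow> x \<in> Obj C \<Longrightarrow> f \<in> hom C x a \<Longrightarrow> g \<in> hom C x b \<Longrightarrow>
   \<exists>!u. u \<in> hom C x p \<and> Comp C p1 u = f \<and> Comp C p2 u = g"
  unfolding is_product_def by (elim conjE, simp)

lemma image_epi:
  assumes ab: "abelian_category C" and f: "f \<in> Arr C" and c: "is_cokernel C f c" and m: "is_kernel C c m"
    and e: "e \<in> Arr C" "Dom C e = Dom C f" "Cod C e = Dom C m" and me: "Comp C m e = f"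
  shows "epi C e"
  unfolding epi_def
proof (intro conjI ballI impI)
  show "e \<in> Arr C" by fact
  fix u v assume uv0: "u \<in> Arr C" "v \<in> Arr C" "Dom C u = Cod C e \<and> Dom C v = Cod C e \<and> Cod C u = Cod C v \<and> Comp C u e = Comp C v e"
  have uv: "Dom C u = Cod C e" "Dom C v = Cod C e" "Cod C v = Cod C u" "Comp C v e = Comp C u e" using uv0(3) by auto
  define W where "W = Cod C u"
  have W: "W \<in> Obj C" using uv0(1) W_def cat by simp
  obtain P p1 p2 where P: "is_product C W W P p1 p2" using ab_prod[OF ab W W] by blast
  have p: "p1 \<in> Arr C" "Dom C p1 = P" "Cod C p1 = W" "p2 \<in> Arr C" "Dom C p2 = P" "Cod C p2 = W" "P \<in> Obj C"
    using prod_props[OF P] by auto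
  note pairing = prod_pair[OF P]
  have idW: "Id C W \<in> hom C W W" using W cat by (simp add: hom_def)
  obtain d where d: "d \<in> hom C W P" "Comp C p1 d = Id C W" "Comp C p2 d = Id C W"
    using pairing[OF W idW idW] by blast
  have darr: "d \<in> Arr C" "Dom C d = W" "Cod C d = P" using d(1) by (auto simp: hom_def)
  have dmono: "mono C d" unfolding mono_def
  proof (intro conjI ballI impI)
    show "d \<in> Arr C" by fact
    fix x y assume xy: "x \<in> Arr C" "y \<in> Arr C" "Cod C x = Dom C d \<and> Cod C y = Dom C d \<and>
      Dom C x = Dom C y \<and> Comp C d x = Comp C d y"
    have xy2: "Cod C x = W" "Cod C y = W" "Comp C d x = Comp C d y" using xy(3) darr(2) by auto
    have "Comp C (Comp C p1 d) x = Comp C p1 (Comp C d x)" using assoc[OF cat xy(1) darr(1) p(1)] xy2 darr p by simp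
    also have "\<dots> = Comp C p1 (Comp C d y)" using xy2(3) by simp
    also have "\<dots> = Comp C (Comp C p1 d) y" using assoc[OF cat xy(2) darr(1) p(1)] xy2 darr p by simp
    finally have "Comp C (Id C W) x = Comp C (Id C W) y" using d(2) by simp
    then show "x = y" using id_left[OF cat xy(1)] id_left[OF cat xy(2)] xy2 by simp
  qed
  obtain q where q: "is_kernel C q d" using ab_mono[OF ab dmono] by blast
  have qa: "q \<in> Arr C" "Dom C q = P" "is_zero_arr C (Comp C q d)" using kernel_props[OF cat q] darr by auto
  have uh: "u \<in> hom C (Cod C e) W" "v \<in> hom C (Cod C e) W" using uv0(1,2) uv W_def by (auto simp: hom_def)
  obtain uv' where uv': "uv' \<in> hom C (Cod C e) P" "Comp C p1 uv' = u" "Comp C p2 uv' = v"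
    using pairing[OF _ uh] e(1) cat by auto
  have uva: "uv' \<in> Arr C" "Dom C uv' = Cod C e" "Cod C uv' = P" using uv'(1) by (auto simp: hom_def)
  define r where "r = Comp C q uv'"
  have ra: "r \<in> Arr C" "Dom C r = Cod C e" using qa uva r_def cat by auto
  obtain j where j: "is_kernel C r j" using ab_ker[OF ab ra(1)] by blast
  have ja: "j \<in> Arr C" "Cod C j = Cod C e" "is_zero_arr C (Comp C r j)" using kernel_props[OF cat j] ra by auto
  have "Comp C q (Comp C uv' j) = Comp C r j" using assoc[OF cat ja(1) uva(1) qa(1)] ja(2) uva(2,3) qa(2) r_def by simp
  then have z1: "is_zero_arr C (Comp C q (Comp C uv' j))" using ja(3) by simp
  have uvj: "Comp C uv' j \<in> Arr C" "Cod C (Comp C uv' j) = Dom C q" "Dom C (Comp C uv' j) = Dom C j"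
    using ja(1,2) uva qa(2) cat by auto
  obtain w where w: "w \<in> Arr C" "Dom C w = Dom C j" "Cod C w = Dom C d" "Comp C d w = Comp C uv' j"
    using kernel_lift[OF cat q uvj(1,2) z1] uvj(3) by auto
  have wW: "Cod C w = W" using w(3) darr(2) by simp
  have uj: "Comp C u j = w"
  proof -
    have "Comp C u j = Comp C (Comp C p1 uv') j" using uv'(2) by simp
    also have "\<dots> = Comp C p1 (Comp C uv' j)" using assoc[OF cat ja(1) uva(1) p(1)] ja(2) uva(2,3) p(2) by simp
    also have "\<dots> = Comp C (Comp C p1 d) w" using w(4) assoc[OF cat w(1) darr(1) p(1)] wW darr(2,3) p(2) by simp
    also have "\<dots> = w" using d(2) id_left[OF cat w(1)] wW by simp
    finally show ?thesis .
  qed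
  have vj: "Comp C v j = w"
  proof -
    have "Comp C v j = Comp C (Comp C p2 uv') j" using uv'(3) by simp
    also have "\<dots> = Comp C p2 (Comp C uv' j)" using assoc[OF cat ja(1) uva(1) p(4)] ja(2) uva(2,3) p(5) by simp
    also have "\<dots> = Comp C (Comp C p2 d) w" using w(4) assoc[OF cat w(1) darr(1) p(4)] wW darr(2,3) p(5) by simp
    also have "\<dots> = w" using d(3) id_left[OF cat w(1)] wW by simp
    finally show ?thesis .
  qed
  have ue: "Comp C u e \<in> hom C (Dom C e) W" "Comp C u e \<in> Arr C" "Dom C (Comp C u e) = Dom C e" "Cod C (Comp C u e) = W"
    using uv0(1) e(1) uv(1) W_def cat by (auto simp: hom_def)
  have ve: "Comp C v e \<in> hom C (Dom C e) W" using ue(1) uv(4) by simp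
  have eq1: "Comp C uv' e = Comp C d (Comp C u e)"
  proof -
    have h1: "Comp C uv' e \<in> hom C (Dom C e) P" using uva e(1) cat by (simp add: hom_def)
    have h2: "Comp C d (Comp C u e) \<in> hom C (Dom C e) P" using darr ue(2,3,4) cat by (simp add: hom_def)
    have c1: "Comp C p1 (Comp C uv' e) = Comp C u e" "Comp C p2 (Comp C uv' e) = Comp C v e"
      using uv'(2,3) assoc[OF cat e(1) uva(1) p(1)] assoc[OF cat e(1) uva(1) p(4)] uva(2,3) p(2,5) by simp_all
    have c2: "Comp C p1 (Comp C d (Comp C u e)) = Comp C u e" "Comp C p2 (Comp C d (Comp C u e)) = Comp C v e"
      using d(2,3) assoc[OF cat ue(2) darr(1) p(1)] assoc[OF cat ue(2) darr(1) p(4)] darr(2,3) p(2,5) ue(4)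
        id_left[OF cat ue(2)] uv(4) by simp_all
    have "\<exists>!w. w \<in> hom C (Dom C e) P \<and> Comp C p1 w = Comp C u e \<and> Comp C p2 w = Comp C v e"
      using pairing[OF _ ue(1) ve] e(1) cat by simp
    then show ?thesis using h1 h2 c1 c2 ex1_uniq[OF cat] by (smt (verit))
  qed
  have "Comp C r e = Comp C q (Comp C uv' e)" using assoc[OF cat e(1) uva(1) qa(1)] uva(2,3) qa(2) r_def by simp
  also have "\<dots> = Comp C (Comp C q d) (Comp C u e)" using eq1 assoc[OF cat ue(2) darr(1) qa(1)] ue(4) darr(2,3) qa(2) by simp
  finally have "is_zero_arr C (Comp C r e)" using zero_comp_right[OF cat qa(3) ue(2)] ue(4) darr(1,2,3) qa(1,2) cat by simp
  then obtain e2 where e2: "e2 \<in> Arr C" "Dom C e2 = Dom C e" "Cod C e2 = Dom C j" "Comp C j e2 = e"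
    using kernel_lift[OF cat j e(1)] ra(2) by auto
  have ma: "m \<in> Arr C" "c \<in> Arr C" "Cod C m = Dom C c" "is_zero_arr C (Comp C c m)" using kernel_props[OF cat m] by auto
  have ca: "Dom C c = Cod C f" using cokernel_props[OF cat c] by auto
  have mjm: "mono C (Comp C m j)" using mono_comp[OF kernel_mono[OF cat m] kernel_mono[OF cat j]] ja(2) e(3) by simp
  have mja: "Comp C m j \<in> Arr C" "Dom C (Comp C m j) = Dom C j" "Cod C (Comp C m j) = Cod C m"
    using ma(1) ja(1,2) e(3) cat by auto
  obtain g where g: "is_kernel C g (Comp C m j)" using ab_mono[OF ab mjm] by blast
  have ga: "g \<in> Arr C" "Dom C g = Cod C m" "is_zero_arr C (Comp C g (Comp C m j))"
    using kernel_props[OF cat g] mja by auto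
  have "Comp C g f = Comp C g (Comp C (Comp C m j) e2)"
    using me e2(4) assoc[OF cat e2(1) ja(1) ma(1)] e2(3) ja(2) e(3) by simp
  also have "\<dots> = Comp C (Comp C g (Comp C m j)) e2"
    using assoc[OF cat e2(1) mja(1) ga(1)] e2(3) mja(2,3) ga(2) by simp
  finally have "is_zero_arr C (Comp C g f)" using zero_comp_right[OF cat ga(3) e2(1)] e2(3) mja ga(1,2) cat by simp
  moreover have "Dom C g = Cod C f" using ga(2) ma(3) ca by simp
  ultimately obtain g' where g': "g' \<in> Arr C" "Dom C g' = Cod C c" "Cod C g' = Cod C g" "Comp C g' c = g"
    using cokernel_desc[OF cat c ga(1)] by auto
  have "Comp C g m = Comp C g' (Comp C c m)" using g'(4) assoc[OF cat ma(1) ma(2) g'(1)] ma(3) g'(2) by simp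
  then have "is_zero_arr C (Comp C g m)" using zero_comp_left[OF cat ma(4) g'(1)] g'(2) ma cat by simp
  then obtain s where s: "s \<in> Arr C" "Dom C s = Dom C m" "Cod C s = Dom C (Comp C m j)" "Comp C (Comp C m j) s = m"
    using kernel_lift[OF cat g ma(1)] ga(2) by auto
  have sj: "Cod C s = Dom C j" using s(3) mja(2) by simp
  have js: "Comp C j s \<in> Arr C" "Dom C (Comp C j s) = Dom C m" "Cod C (Comp C j s) = Dom C m"
    using ja(1,2) s(1,2) sj e(3) cat by auto
  have "Comp C m (Comp C j s) = m" using s(4) assoc[OF cat s(1) ja(1) ma(1)] sj ja(2) e(3) by simp
  also have "\<dots> = Comp C m (Id C (Dom C m))" using id_right[OF cat ma(1)] by simp
  finally have js2: "Comp C j s = Id C (Dom C m)"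
    using monoD[OF cat kernel_mono[OF cat m] js(1)] js(2,3) ma(1) cat by simp
  have ue': "Dom C u = Dom C m" "Dom C v = Dom C m" using uv(1,2) e(3) by simp_all
  have "u = Comp C u (Comp C j s)" using js2 id_right[OF cat uv0(1)] ue' by simp
  also have "\<dots> = Comp C (Comp C u j) s" using assoc[OF cat s(1) ja(1) uv0(1)] sj ja(2) uv(1) by simp
  also have "\<dots> = Comp C (Comp C v j) s" using uj vj by simp
  also have "\<dots> = Comp C v (Comp C j s)" using assoc[OF cat s(1) ja(1) uv0(2)] sj ja(2) uv(2) by simp
  also have "\<dots> = v" using js2 id_right[OF cat uv0(2)] ue' by simp
  finally show "u = v" .
qed

lemma kernel_univ: "is_kernel C f k \<Longrightarrow> g \<in> Arr C \<Longrightarrow> Cod C g = Dom C f \<Longrightarrow> is_zero_arr C (Comp C f g) \<Longrightarrow>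
   \<exists>!u. u \<in> hom C (Dom C g) (Dom C k) \<and> Comp C k u = g"
  unfolding is_kernel_def by (elim conjE, simp)
lemma cokernel_univ: "is_cokernel C f c \<Longrightarrow> g \<in> Arr C \<Longrightarrow> Dom C g = Cod C f \<Longrightarrow> is_zero_arr C (Comp C g f) \<Longrightarrow>
   \<exists>!u. u \<in> hom C (Cod C c) (Cod C g) \<and> Comp C u c = g"
  unfolding is_cokernel_def by (elim conjE, simp)

lemma kernel_of_factor:
  assumes k: "is_kernel C f k" and m: "mono C m" and e: "e \<in> Arr C" "Cod C e = Dom C m" and me: "Comp C m e = f"
  shows "is_kernel C e k"
proof -
  have ma: "m \<in> Arr C" using m unfolding mono_def by simp
  have ka: "k \<in> Arr C" "f \<in> Arr C" "Cod C k = Dom C f" "is_zero_arr C (Comp C f k)" using kernel_props[OF cat k] by auto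
  have de: "Dom C e = Dom C f" using me e ma cat by auto
  have fcod: "Cod C f = Cod C m" using me e ma cat by auto
  have ek: "Comp C e k \<in> Arr C" "Dom C (Comp C e k) = Dom C k" "Cod C (Comp C e k) = Dom C m"
    using e ka(1,3) de cat by auto
  have "is_zero_arr C (Comp C e k)"
  proof -
    obtain z g h where z: "zero_obj C z" "g \<in> Arr C" "h \<in> Arr C" "Dom C g = Dom C (Comp C f k)" "Cod C g = z"
      "Dom C h = z" "Cod C h = Cod C (Comp C f k)" "Comp C f k = Comp C h g" using zero_arrD[OF cat ka(4)] by blast
    obtain t where t: "t \<in> Arr C" "Dom C t = z" "Cod C t = Dom C m" using zero_from[OF cat z(1), of "Dom C m"] ma cat by auto
    define x0 where "x0 = Comp C t g"
    have x0: "is_zero_arr C x0" "x0 \<in> Arr C" "Dom C x0 = Dom C k" "Cod C x0 = Dom C m"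
      using zero_arrI[OF cat z(1) z(2) t(1) z(5) t(2)] x0_def z(2,4,5) t ka cat by auto
    have z1: "is_zero_arr C (Comp C m x0)" using zero_comp_left[OF cat x0(1) ma] x0(4) by simp
    have "Comp C m (Comp C e k) = Comp C f k" using assoc[OF cat ka(1) e(1) ma] e(2) ka(3) de me by simp
    then have z2: "is_zero_arr C (Comp C m (Comp C e k))" using ka(4) by simp
    have "Comp C m (Comp C e k) = Comp C m x0"
      using zero_unique[OF cat z2 z1] ek x0 ma cat by simp
    then have "Comp C e k = x0" using monoD[OF cat m ek(1) x0(2)] ek x0 by simp
    then show ?thesis using x0(1) by simp
  qed
  moreover have "\<forall>g \<in> Arr C. Cod C g = Dom C e \<and> is_zero_arr C (Comp C e g) \<longrightarrow>
        (\<exists>!u. u \<in> hom C (Dom C g) (Dom C k) \<and> Comp C k u = g)"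
  proof (intro ballI impI)
    fix g assume g: "g \<in> Arr C" "Cod C g = Dom C e \<and> is_zero_arr C (Comp C e g)"
    have g2: "Cod C g = Dom C f" "is_zero_arr C (Comp C e g)" using g(2) de by auto
    have "Comp C f g = Comp C m (Comp C e g)" using assoc[OF cat g(1) e(1) ma] e(2) g2(1) de me by simp
    then have "is_zero_arr C (Comp C f g)" using zero_comp_left[OF cat g2(2) ma] e g(1) g2(1) de cat by simp
    then show "\<exists>!u. u \<in> hom C (Dom C g) (Dom C k) \<and> Comp C k u = g" using kernel_univ[OF k g(1) g2(1)] by simp
  qed
  ultimately show ?thesis unfolding is_kernel_def using e(1) ka(1,3) de by simp
qed

lemma short_exact_epi:
  assumes ab: "abelian_category C" and k: "is_kernel C e k" and ep: "epi C e"
  shows "short_exact C k e"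
proof -
  obtain g0 where g0: "is_cokernel C g0 e" using ab_epi[OF ab ep] by blast
  have ka: "k \<in> Arr C" "e \<in> Arr C" "Cod C k = Dom C e" "is_zero_arr C (Comp C e k)" using kernel_props[OF cat k] by auto
  have ga: "g0 \<in> Arr C" "Dom C e = Cod C g0" "is_zero_arr C (Comp C e g0)" using cokernel_props[OF cat g0] by auto
  obtain w where w: "w \<in> Arr C" "Dom C w = Dom C g0" "Cod C w = Dom C k" "Comp C k w = g0"
    using kernel_lift[OF cat k ga(1)] ga(2,3) by auto
  have "\<forall>x \<in> Arr C. Dom C x = Cod C k \<and> is_zero_arr C (Comp C x k) \<longrightarrow>
        (\<exists>!u. u \<in> hom C (Cod C e) (Cod C x) \<and> Comp C u e = x)"
  proof (intro ballI impI)
    fix x assume x: "x \<in> Arr C" "Dom C x = Cod C k \<and> is_zero_arr C (Comp C x k)"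
    have x2: "Dom C x = Cod C g0" "is_zero_arr C (Comp C x k)" using x(2) ka(3) ga(2) by auto
    have "Comp C x g0 = Comp C (Comp C x k) w" using assoc[OF cat w(1) ka(1) x(1)] w(3,4) x(2) by simp
    then have "is_zero_arr C (Comp C x g0)" using zero_comp_right[OF cat x2(2) w(1)] w(3) ka(1) x(1,2) cat by simp
    then show "\<exists>!u. u \<in> hom C (Cod C e) (Cod C x) \<and> Comp C u e = x" using cokernel_univ[OF g0 x(1) x2(1)] by simp
  qed
  then have "is_cokernel C k e" unfolding is_cokernel_def using ka by simp
  then show ?thesis unfolding short_exact_def using k by simp
qed

lemma short_exact_image:
  assumes c: "is_cokernel C f c" and m: "is_kernel C c m" and e: "e \<in> Arr C" "Cod C e = Dom C m" and me: "Comp C m e = f"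
  shows "short_exact C m c"
proof -
  have ma: "m \<in> Arr C" "c \<in> Arr C" "Cod C m = Dom C c" "is_zero_arr C (Comp C c m)" using kernel_props[OF cat m] by auto
  have ca: "Dom C c = Cod C f" using cokernel_props[OF cat c] by auto
  have "\<forall>x \<in> Arr C. Dom C x = Cod C m \<and> is_zero_arr C (Comp C x m) \<longrightarrow>
        (\<exists>!u. u \<in> hom C (Cod C c) (Cod C x) \<and> Comp C u c = x)"
  proof (intro ballI impI)
    fix x assume x: "x \<in> Arr C" "Dom C x = Cod C m \<and> is_zero_arr C (Comp C x m)"
    have x2: "Dom C x = Cod C f" "is_zero_arr C (Comp C x m)" using x(2) ma(3) ca by auto
    have "Comp C x f = Comp C (Comp C x m) e" using assoc[OF cat e(1) ma(1) x(1)] e(2) x(2) me by simp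
    then have "is_zero_arr C (Comp C x f)" using zero_comp_right[OF cat x2(2) e(1)] e(2) ma(1) x(1,2) cat by simp
    then show "\<exists>!u. u \<in> hom C (Cod C c) (Cod C x) \<and> Comp C u c = x" using cokernel_univ[OF c x(1) x2(1)] by simp
  qed
  then have "is_cokernel C m c" unfolding is_cokernel_def using ma by simp
  then show ?thesis unfolding short_exact_def using m by simp
qed

lemma amp_se: "amplitude C \<alpha> \<Longrightarrow> short_exact C f g \<Longrightarrow>
   \<alpha> (Dom C f) \<le> \<alpha> (Cod C f) \<and> \<alpha> (Cod C g) \<le> \<alpha> (Cod C f) \<and> \<alpha> (Cod C f) \<le> \<alpha> (Dom C f) + \<alpha> (Cod C g)"
  unfolding amplitude_def by (elim conjE, simp)

lemma amp_bounds:
  assumes ab: "abelian_category C" and amp: "amplitude C \<alpha>" and f: "f \<in> Arr C"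
  shows "amp_ker C \<alpha> f \<le> \<alpha> (Dom C f)" "\<alpha> (Dom C f) \<le> amp_ker C \<alpha> f + \<alpha> (Cod C f)"
    "\<alpha> (Cod C f) \<le> \<alpha> (Dom C f) + amp_coker C \<alpha> f" "amp_coker C \<alpha> f \<le> \<alpha> (Cod C f)"
proof -
  define k where "k = (SOME k. is_kernel C f k)"
  define c where "c = (SOME c. is_cokernel C f c)"
  have k: "is_kernel C f k" unfolding k_def using ab_ker[OF ab f] by (rule someI_ex)
  have c: "is_cokernel C f c" unfolding c_def using ab_coker[OF ab f] by (rule someI_ex)
  have ak: "amp_ker C \<alpha> f = \<alpha> (Dom C k)" unfolding amp_ker_def k_def ..
  have ac: "amp_coker C \<alpha> f = \<alpha> (Cod C c)" unfolding amp_coker_def c_def ..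
  have ca: "c \<in> Arr C" "Dom C c = Cod C f" "is_zero_arr C (Comp C c f)" using cokernel_props[OF cat c] by auto
  obtain m where m: "is_kernel C c m" using ab_ker[OF ab ca(1)] by blast
  have ma: "m \<in> Arr C" "Cod C m = Dom C c" using kernel_props[OF cat m] by auto
  obtain e where e: "e \<in> Arr C" "Dom C e = Dom C f" "Cod C e = Dom C m" "Comp C m e = f"
    using kernel_lift[OF cat m f] ca by auto
  have ep: "epi C e" using image_epi[OF ab f c m e] .
  have ke: "is_kernel C e k" using kernel_of_factor[OF k kernel_mono[OF cat m] e(1,3,4)] .
  have se1: "short_exact C k e" using short_exact_epi[OF ab ke ep] .
  have se2: "short_exact C m c" using short_exact_image[OF c m e(1,3,4)] .
  have kc: "Cod C k = Dom C f" using kernel_props[OF cat k] by auto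
  note a1 = amp_se[OF amp se1] and a2 = amp_se[OF amp se2]
  have i1: "\<alpha> (Dom C k) \<le> \<alpha> (Dom C f)" "\<alpha> (Dom C m) \<le> \<alpha> (Dom C f)" "\<alpha> (Dom C f) \<le> \<alpha> (Dom C k) + \<alpha> (Dom C m)"
    using a1 kc e(3) by auto
  have i2: "\<alpha> (Dom C m) \<le> \<alpha> (Cod C f)" "\<alpha> (Cod C c) \<le> \<alpha> (Cod C f)" "\<alpha> (Cod C f) \<le> \<alpha> (Dom C m) + \<alpha> (Cod C c)"
    using a2 ma(2) ca(2) by auto
  show "amp_ker C \<alpha> f \<le> \<alpha> (Dom C f)" using ak i1(1) by simp
  show "amp_coker C \<alpha> f \<le> \<alpha> (Cod C f)" using ac i2(2) by simp
  show "\<alpha> (Dom C f) \<le> amp_ker C \<alpha> f + \<alpha> (Cod C f)"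
    using order_trans[OF i1(3) add_left_mono[OF i2(1)]] ak by simp
  show "\<alpha> (Cod C f) \<le> \<alpha> (Dom C f) + amp_coker C \<alpha> f"
    using order_trans[OF i2(3) add_right_mono[OF i1(2)]] ac by simp
qed

lemma span_step:
  assumes ab: "abelian_category C" and amp: "amplitude C \<alpha>" and l: "l \<in> Arr C" and r: "r \<in> Arr C" and d: "Dom C l = Dom C r"
  shows "\<alpha> (Cod C l) \<le> \<alpha> (Cod C r) + (amp_ker C \<alpha> l + amp_coker C \<alpha> l + amp_ker C \<alpha> r + amp_coker C \<alpha> r)"
proof -
  have 1: "\<alpha> (Cod C l) \<le> \<alpha> (Dom C r) + amp_coker C \<alpha> l" using amp_bounds(3)[OF ab amp l] d by simp
  have 2: "\<alpha> (Dom C r) \<le> amp_ker C \<alpha> r + \<alpha> (Cod C r)" using amp_bounds(2)[OF ab amp r] .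
  have 3: "\<alpha> (Cod C l) \<le> amp_ker C \<alpha> r + \<alpha> (Cod C r) + amp_coker C \<alpha> l"
    using order_trans[OF 1 add_right_mono[OF 2]] .
  have "amp_ker C \<alpha> r + \<alpha> (Cod C r) + amp_coker C \<alpha> l \<le>
     \<alpha> (Cod C r) + (amp_ker C \<alpha> l + amp_coker C \<alpha> l + amp_ker C \<alpha> r + amp_coker C \<alpha> r)"
  proof -
    have "amp_ker C \<alpha> r + \<alpha> (Cod C r) + amp_coker C \<alpha> l + (amp_ker C \<alpha> l + amp_coker C \<alpha> r) =
       \<alpha> (Cod C r) + (amp_ker C \<alpha> l + amp_coker C \<alpha> l + amp_ker C \<alpha> r + amp_coker C \<alpha> r)"
      by (simp add: ac_simps)
    moreover have "amp_ker C \<alpha> r + \<alpha> (Cod C r) + amp_coker C \<alpha> l \<le> amp_ker C \<alpha> r + \<alpha> (Cod C r) + amp_coker C \<alpha> l + (amp_ker C \<alpha> l + amp_coker C \<alpha> r)"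
      by (rule add_increasing2) auto
    ultimately show ?thesis by simp
  qed
  then show ?thesis using 3 by (rule order_trans[rotated])
qed

lemma zigzag_bound:
  assumes ab: "abelian_category C" and amp: "amplitude C \<alpha>"
  shows "zigzag C A B zs \<Longrightarrow> \<alpha> A \<le> \<alpha> B + zigzag_cost C \<alpha> zs"
proof (induction zs arbitrary: A)
  case Nil
  then show ?case by (simp add: zigzag_def)
next
  case (Cons p rest)
  have z: "p \<in> set (p # rest) \<Longrightarrow> True" by simp
  have p0: "fst p \<in> Arr C" "snd p \<in> Arr C" "Dom C (fst p) = Dom C (snd p)"
    using Cons.prems unfolding zigzag_def by (metis length_greater_0_conv list.discI nth_Cons_0)+
  have pA: "Cod C (fst p) = A" using Cons.prems unfolding zigzag_def by simp
  have cp: "zigzag_cost C \<alpha> (p # rest) = (amp_ker C \<alpha> (fst p) + amp_coker C \<alpha> (fst p) + amp_ker C \<alpha> (snd p) + amp_coker C \<alpha> (snd p))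
     + zigzag_cost C \<alpha> rest"
    unfolding zigzag_cost_def by simp
  note st = span_step[OF ab amp p0]
  show ?case
  proof (cases "rest = []")
    case True
    then have "Cod C (snd p) = B" using Cons.prems unfolding zigzag_def by simp
    then show ?thesis using st pA cp True by (simp add: zigzag_cost_def)
  next
    case False
    have zr: "zigzag C (Cod C (snd p)) B rest"
      unfolding zigzag_def
    proof (intro conjI allI impI)
      show "rest \<noteq> []" by fact
      fix i assume i: "i < length rest"
      have "Suc i < length (p # rest)" using i by simp
      then have "fst ((p#rest) ! Suc i) \<in> Arr C \<and> snd ((p#rest) ! Suc i) \<in> Arr C \<and>
        Dom C (fst ((p#rest) ! Suc i)) = Dom C (snd ((p#rest) ! Suc i))"
        using Cons.prems unfolding zigzag_def by blast
      then show "fst (rest ! i) \<in> Arr C" "snd (rest ! i) \<in> Arr C" "Dom C (fst (rest ! i)) = Dom C (snd (rest ! i))" by simp_all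
    next
      have "Suc 0 < length (p # rest)" using False by simp
      then have "Cod C (snd ((p#rest) ! 0)) = Cod C (fst ((p#rest) ! Suc 0))"
        using Cons.prems unfolding zigzag_def by blast
      then show "Cod C (fst (hd rest)) = Cod C (snd p)" using False by (simp add: hd_conv_nth)
    next
      show "Cod C (snd (last rest)) = B" using Cons.prems False unfolding zigzag_def by simp
    next
      fix i assume i: "Suc i < length rest"
      have "Suc (Suc i) < length (p # rest)" using i by simp
      then have "Cod C (snd ((p#rest) ! Suc i)) = Cod C (fst ((p#rest) ! Suc (Suc i)))"
        using Cons.prems unfolding zigzag_def by blast
      then show "Cod C (snd (rest ! i)) = Cod C (fst (rest ! Suc i))" by simp
    qed
    have ih: "\<alpha> (Cod C (snd p)) \<le> \<alpha> B + zigzag_cost C \<alpha> rest" using Cons.IH[OF zr] .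
    have "\<alpha> A \<le> \<alpha> (Cod C (snd p)) + (amp_ker C \<alpha> (fst p) + amp_coker C \<alpha> (fst p) + amp_ker C \<alpha> (snd p) + amp_coker C \<alpha> (snd p))"
      using st pA by simp
    also have "\<dots> \<le> \<alpha> B + zigzag_cost C \<alpha> rest + (amp_ker C \<alpha> (fst p) + amp_coker C \<alpha> (fst p) + amp_ker C \<alpha> (snd p) + amp_coker C \<alpha> (snd p))"
      using ih by (rule add_right_mono)
    also have "\<dots> = \<alpha> B + zigzag_cost C \<alpha> (p # rest)" using cp by (simp add: ac_simps)
    finally show ?thesis .
  qed
qed

end

lemma ab_category: "abelian_category C \<Longrightarrow> category C" by (simp add: abelian_category_def)

theorem mainTheorem5:
  fixes C :: "('o, 'm) cat" and \<alpha> :: "'o \<Rightarrow> ennreal" and A Z :: 'o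
  assumes "abelian_category C"
    and "amplitude C \<alpha>"
    and "A \<in> Obj C"
    and "zero_obj C Z"
  shows "\<alpha> A = path_dist C \<alpha> A Z"
proof -
  have cat: "category C" using ab_category[OF assms(1)] .
  have aZ: "\<alpha> Z = 0" using assms(2,4) unfolding amplitude_def by blast
  have Zo: "Z \<in> Obj C" using zero_obj_obj[OF cat assms(4)] .
  have ge: "\<alpha> A \<le> path_dist C \<alpha> A Z"
    unfolding path_dist_def
  proof (rule Inf_greatest)
    fix x assume "x \<in> {zigzag_cost C \<alpha> zs |zs. zigzag C A Z zs}"
    then obtain zs where x: "x = zigzag_cost C \<alpha> zs" "zigzag C A Z zs" by blast
    show "\<alpha> A \<le> x" using zigzag_bound[OF cat assms(1,2) x(2)] aZ x(1) by simp
  qed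
  obtain s where s: "s \<in> Arr C" "Dom C s = Z" "Cod C s = A" using zero_from[OF cat assms(4,3)] by blast
  define zs where "zs = [(s, Id C Z)]"
  have zz: "zigzag C A Z zs" unfolding zigzag_def zs_def using s Zo cat by simp
  have iz: "Id C Z \<in> Arr C" "Dom C (Id C Z) = Z" "Cod C (Id C Z) = Z" using Zo cat by simp_all
  have b1: "amp_ker C \<alpha> s \<le> 0" using amp_bounds(1)[OF cat assms(1,2) s(1)] s(2) aZ by simp
  have b2: "amp_coker C \<alpha> s \<le> \<alpha> A" using amp_bounds(4)[OF cat assms(1,2) s(1)] s(3) by simp
  have b3: "amp_ker C \<alpha> (Id C Z) \<le> 0" using amp_bounds(1)[OF cat assms(1,2) iz(1)] iz aZ by simp
  have b4: "amp_coker C \<alpha> (Id C Z) \<le> 0" using amp_bounds(4)[OF cat assms(1,2) iz(1)] iz aZ by simp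
  have "zigzag_cost C \<alpha> zs \<le> \<alpha> A"
    unfolding zigzag_cost_def zs_def using b1 b2 b3 b4 by simp
  moreover have "path_dist C \<alpha> A Z \<le> zigzag_cost C \<alpha> zs"
    unfolding path_dist_def using zz by (blast intro: Inf_lower)
  ultimately have "path_dist C \<alpha> A Z \<le> \<alpha> A" by simp
  then show ?thesis using ge by simp
qed

end
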